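(* For $n\ge2$, the group $VSPG_n$ is representable as the semi-direct product $VSPG_n=VS_{n-1}^*\rtimes VSPG_{n-1}=VS_{n-1}^*\rtimes\big(VS_{n-2}^*\rtimes(\cdots\rtimes(VS_2^*\rtimes VS_1^* )\cdots)\big)$, where $VS_{k-1}^*$, for $3\le k\le n$, are infinitely generated subgroups of $VSPG_n$, and $VS_1^*$ is a subgroup of rank $4$ (generated by $\mu_{12},\mu_{21},\gamma_{12},\gamma_{21}$).
   Context: $VSPG_n$ is the group generated by $\{\mu_{ij},\gamma_{ij}\mid 1\le i\ne j\le n\}$ with defining relations (distinct letters denote distinct indices): $\mu_{ij}\mu_{ik}\mu_{jk}=\mu_{jk}\mu_{ik}\mu_{ij}$; $\mu_{ij}\mu_{ik}\gamma_{jk}=\gamma_{jk}\mu_{ik}\mu_{ij}$; $\gamma_{ij}\mu_{ik}\mu_{jk}=\mu_{jk}\mu_{ik}\gamma_{ij}$; $\mu_{ij}\gamma_{ji}=\gamma_{ij}\mu_{ji}$; $\mu_{ij}\mu_{kl}=\mu_{kl}\mu_{ij}$, $\gamma_{ij}\gamma_{kl}=\gamma_{kl}\gamma_{ij}$, $\mu_{ij}\gamma_{kl}=\gamma_{kl}\mu_{ij}$ (the virtual singular pure braid group, i.e. the kernel of the permutation homomorphism on the virtual singular braid group $VSG_n$). For $k<n$, $VSPG_k$ is identified with the subgroup of $VSPG_n$ generated by $\mu_{ij},\gamma_{ij}$ with $i,j\le k$. For $2\le i\le n$, $VS_{i-1}$ is the subgroup generated by $\mu_{1i},\dots,\mu_{i-1,i},\mu_{i1},\dots,\mu_{i,i-1},\gamma_{1i},\dots,\gamma_{i-1,i},\gamma_{i1},\dots,\gamma_{i,i-1}$,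 and $VS_{i-1}^*$ is the normal closure of $VS_{i-1}$ in $VSPG_i$; $VSPG_2=VS_1=VS_1^*$. *)

theory Defs
  imports "HOL-Algebra.Algebra"
begin

datatype gen = Mu nat nat | Ga nat nat

text \<open>A letter is a generator together with an exponent sign (True = +1, False = -1).\<close>
type_synonym letter = "gen \<times> bool"
type_synonym word = "letter list"

fun valid_gen :: "nat \<Rightarrow> gen \<Rightarrow> bool" where
  "valid_gen n (Mu i j) = (1 \<le> i \<and> i \<le> n \<and> 1 \<le> j \<and> j \<le> n \<and> i \<noteq> j)"
| "valid_gen n (Ga i j) = (1 \<le> i \<and> i \<le> n \<and> 1 \<le> j \<and> j \<le> n \<and> i \<noteq> j)"

definition words :: "nat \<Rightarrow> word set" where
  "words n = {w. \<forall>x \<in> set w. valid_gen n (fst x)}"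

definition inv_letter :: "letter \<Rightarrow> letter" where
  "inv_letter x = (fst x, \<not> snd x)"

definition mu :: "nat \<Rightarrow> nat \<Rightarrow> word" where "mu i j = [(Mu i j, True)]"
definition ga :: "nat \<Rightarrow> nat \<Rightarrow> word" where "ga i j = [(Ga i j, True)]"

definition in_range :: "nat \<Rightarrow> nat \<Rightarrow> bool" where
  "in_range n i = (1 \<le> i \<and> i \<le> n)"

definition vspg_rels :: "nat \<Rightarrow> (word \<times> word) set" where
  "vspg_rels n =
     {(mu i j @ mu i k @ mu j k, mu j k @ mu i k @ mu i j) | i j k.
        in_range n i \<and> in_range n j \<and> in_range n k \<and> distinct [i, j, k]}
   \<union> {(mu i j @ mu i k @ ga j k, ga j k @ mu i k @ mu i j) | i j k.
        in_range n i \<and> in_range n j \<and> in_range n k \<and> distinct [i, j, k]}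
   \<union> {(ga i j @ mu i k @ mu j k, mu j k @ mu i k @ ga i j) | i j k.
        in_range n i \<and> in_range n j \<and> in_range n k \<and> distinct [i, j, k]}
   \<union> {(mu i j @ ga j i, ga i j @ mu j i) | i j.
        in_range n i \<and> in_range n j \<and> i \<noteq> j}
   \<union> {(mu i j @ mu k l, mu k l @ mu i j) | i j k l.
        in_range n i \<and> in_range n j \<and> in_range n k \<and> in_range n l \<and> distinct [i, j, k, l]}
   \<union> {(ga i j @ ga k l, ga k l @ ga i j) | i j k l.
        in_range n i \<and> in_range n j \<and> in_range n k \<and> in_range n l \<and> distinct [i, j, k, l]}
   \<union> {(mu i j @ ga k l, ga k l @ mu i j) | i j k l.
        in_range n i \<and> in_range n j \<and> in_range n k \<and> in_range n l \<and> distinct [i, j, k, l]}"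

inductive vspg_eq :: "nat \<Rightarrow> word \<Rightarrow> word \<Rightarrow> bool" for n where
  refl: "w \<in> words n \<Longrightarrow> vspg_eq n w w"
| sym: "vspg_eq n u v \<Longrightarrow> vspg_eq n v u"
| trans: "vspg_eq n u v \<Longrightarrow> vspg_eq n v w \<Longrightarrow> vspg_eq n u w"
| cancel: "u \<in> words n \<Longrightarrow> v \<in> words n \<Longrightarrow> valid_gen n (fst x) \<Longrightarrow>
           vspg_eq n (u @ [x, inv_letter x] @ v) (u @ v)"
| rel: "(l, r) \<in> vspg_rels n \<Longrightarrow> u \<in> words n \<Longrightarrow> v \<in> words n \<Longrightarrow>
           vspg_eq n (u @ l @ v) (u @ r @ v)"

definition vspg_R :: "nat \<Rightarrow> (word \<times> word) set" where
  "vspg_R n = {(u, v). vspg_eq n u v}"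

definition VSPG :: "nat \<Rightarrow> word set monoid" where
  "VSPG n = \<lparr> carrier = words n // vspg_R n,
              monoid.mult = (\<lambda>A B. \<Union>a\<in>A. \<Union>b\<in>B. vspg_R n `` {a @ b}),
              one = vspg_R n `` {[]} \<rparr>"

definition mu_el :: "nat \<Rightarrow> nat \<Rightarrow> nat \<Rightarrow> word set" where
  "mu_el n i j = vspg_R n `` {mu i j}"
definition ga_el :: "nat \<Rightarrow> nat \<Rightarrow> nat \<Rightarrow> word set" where
  "ga_el n i j = vspg_R n `` {ga i j}"

text \<open>VSPG_k, viewed inside VSPG_n: generated by mu_ij, ga_ij with i, j \<le> k.\<close>
definition VSPG_sub :: "nat \<Rightarrow> nat \<Rightarrow> word set set" where
  "VSPG_sub n k = generate (VSPG n)
     ({mu_el n i j | i j. in_range k i \<and> in_range k j \<and> i \<noteq> j}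
      \<union> {ga_el n i j | i j. in_range k i \<and> in_range k j \<and> i \<noteq> j})"

text \<open>Generators of VS_{i-1} (inside VSPG_n).\<close>
definition VS_gens :: "nat \<Rightarrow> nat \<Rightarrow> word set set" where
  "VS_gens n i = {x. \<exists>j. 1 \<le> j \<and> j < i \<and>
      (x = mu_el n j i \<or> x = mu_el n i j \<or> x = ga_el n j i \<or> x = ga_el n i j)}"

definition normal_closure :: "('a, 'b) monoid_scheme \<Rightarrow> 'a set \<Rightarrow> 'a set" where
  "normal_closure G S =
     generate G (\<Union>g\<in>carrier G. (\<lambda>s. g \<otimes>\<^bsub>G\<^esub> s \<otimes>\<^bsub>G\<^esub> inv\<^bsub>G\<^esub> g) ` S)"

definition VS :: "nat \<Rightarrow> nat \<Rightarrow> word set set" where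
  "VS n m = generate (VSPG n) (VS_gens n (m + 1))"

definition VS_star :: "nat \<Rightarrow> nat \<Rightarrow> word set set" where
  "VS_star n m = normal_closure ((VSPG n)\<lparr>carrier := VSPG_sub n (m + 1)\<rparr>) (VS_gens n (m + 1))"

definition internal_semidirect :: "('a, 'b) monoid_scheme \<Rightarrow> 'a set \<Rightarrow> 'a set \<Rightarrow> bool" where
  "internal_semidirect G N H \<longleftrightarrow>
     group G \<and> N \<lhd> G \<and> subgroup H G \<and> N \<inter> H = {\<one>\<^bsub>G\<^esub>} \<and> N <#>\<^bsub>G\<^esub> H = carrier G"

definition finitely_generated_subgroup :: "('a, 'b) monoid_scheme \<Rightarrow> 'a set \<Rightarrow> bool" where
  "finitely_generated_subgroup G H \<longleftrightarrow> (\<exists>S. finite S \<and> S \<subseteq> H \<and> generate G S = H)"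

end

theory Submission
  imports Defs
begin


abbreviation cls :: "nat \<Rightarrow> word \<Rightarrow> word set" where
  "cls n w \<equiv> vspg_R n `` {w}"

lemma words_Cons[simp]: "x # w \<in> words n \<longleftrightarrow> valid_gen n (fst x) \<and> w \<in> words n"
  by (auto simp: words_def)
lemma words_append[simp]: "u @ w \<in> words n \<longleftrightarrow> u \<in> words n \<and> w \<in> words n"
  by (auto simp: words_def)
lemma words_Nil[simp]: "[] \<in> words n"
  by (auto simp: words_def)

lemma rels_words: "(l, r) \<in> vspg_rels n \<Longrightarrow> l \<in> words n \<and> r \<in> words n"
  unfolding vspg_rels_def mu_def ga_def in_range_def
  by (auto simp: words_def)

lemma eq_words: "vspg_eq n u v \<Longrightarrow> u \<in> words n \<and> v \<in> words n"
  by (induction rule: vspg_eq.induct) (auto simp: inv_letter_def dest: rels_words)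

lemma eq_app_r: "vspg_eq n u v \<Longrightarrow> w \<in> words n \<Longrightarrow> vspg_eq n (u @ w) (v @ w)"
proof (induction rule: vspg_eq.induct)
  case (refl w') then show ?case by (intro vspg_eq.refl) simp
next
  case (sym u v) then show ?case by (blast intro: vspg_eq.sym)
next
  case (trans u v w') then show ?case by (blast intro: vspg_eq.trans)
next
  case (cancel u v x) then show ?case using vspg_eq.cancel[of u n "v @ w" x] by simp
next
  case (rel l r u v) then show ?case using vspg_eq.rel[of l r n u "v @ w"] by simp
qed

lemma eq_app_l: "vspg_eq n u v \<Longrightarrow> w \<in> words n \<Longrightarrow> vspg_eq n (w @ u) (w @ v)"
proof (induction rule: vspg_eq.induct)
  case (refl w') then show ?case by (intro vspg_eq.refl) simp
next
  case (sym u v) then show ?case by (blast intro: vspg_eq.sym)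
next
  case (trans u v w') then show ?case by (blast intro: vspg_eq.trans)
next
  case (cancel u v x) then show ?case using vspg_eq.cancel[of "w @ u" n v x] by simp
next
  case (rel l r u v) then show ?case using vspg_eq.rel[of l r n "w @ u" v] by simp
qed

lemma eq_cong: "vspg_eq n u u' \<Longrightarrow> vspg_eq n v v' \<Longrightarrow> vspg_eq n (u @ v) (u' @ v')"
  by (meson eq_app_l eq_app_r eq_words vspg_eq.trans)

lemma equiv_R: "equiv (words n) (vspg_R n)"
  unfolding equiv_def refl_on_def sym_def trans_def vspg_R_def
  by (auto dest: eq_words intro: vspg_eq.refl vspg_eq.sym vspg_eq.trans)

lemma R_iff: "(u, v) \<in> vspg_R n \<longleftrightarrow> vspg_eq n u v"
  by (simp add: vspg_R_def)

lemma cls_eq_iff: "u \<in> words n \<Longrightarrow> v \<in> words n \<Longrightarrow> cls n u = cls n v \<longleftrightarrow> vspg_eq n u v"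
  using equiv_class_eq_iff[OF equiv_R] by (simp add: R_iff)

lemma cls_eqI: "vspg_eq n u v \<Longrightarrow> cls n u = cls n v"
  using cls_eq_iff eq_words by blast

lemma carrier_VSPG: "carrier (VSPG n) = words n // vspg_R n"
  by (simp add: VSPG_def)

lemma cls_carrier[simp]: "w \<in> words n \<Longrightarrow> cls n w \<in> carrier (VSPG n)"
  by (simp add: carrier_VSPG quotientI)

lemma carrier_E: "A \<in> carrier (VSPG n) \<Longrightarrow> (\<And>w. w \<in> words n \<Longrightarrow> A = cls n w \<Longrightarrow> P) \<Longrightarrow> P"
  by (auto simp: carrier_VSPG quotient_def)

lemma mem_cls: "a \<in> cls n w \<longleftrightarrow> vspg_eq n w a"
  by (simp add: R_iff)

lemma mult_cls: assumes "u \<in> words n" "v \<in> words n"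
  shows "cls n u \<otimes>\<^bsub>VSPG n\<^esub> cls n v = cls n (u @ v)"
proof -
  have H: "\<And>a b. a \<in> cls n u \<Longrightarrow> b \<in> cls n v \<Longrightarrow> cls n (a @ b) = cls n (u @ v)"
    by (metis cls_eqI eq_cong mem_cls vspg_eq.sym)
  have U: "u \<in> cls n u" "v \<in> cls n v" using assms vspg_eq.refl by (auto simp only: mem_cls)
  have "(\<Union>a\<in>cls n u. \<Union>b\<in>cls n v. cls n (a @ b)) = (\<Union>a\<in>cls n u. \<Union>b\<in>cls n v. cls n (u @ v))"
    using H by (metis (no_types, lifting) SUP_cong)
  also have "\<dots> = cls n (u @ v)" using U by blast
  finally show ?thesis by (simp add: VSPG_def)
qed

lemma one_VSPG: "\<one>\<^bsub>VSPG n\<^esub> = cls n []" by (simp add: VSPG_def)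

definition inv_word :: "word \<Rightarrow> word" where "inv_word w = rev (map inv_letter w)"

lemma inv_word_words[simp]: "inv_word w \<in> words n \<longleftrightarrow> w \<in> words n"
  by (auto simp: inv_word_def words_def inv_letter_def)
lemma inv_inv_letter[simp]: "inv_letter (inv_letter x) = x"
  by (simp add: inv_letter_def)
lemma inv_word_inv[simp]: "inv_word (inv_word w) = w"
  by (simp add: inv_word_def rev_map comp_def)
lemma inv_word_Cons: "inv_word (x # w) = inv_word w @ [inv_letter x]"
  by (simp add: inv_word_def)

lemma r_inv_word: "w \<in> words n \<Longrightarrow> vspg_eq n (w @ inv_word w) []"
proof (induction w)
  case Nil then show ?case by (simp add: inv_word_def vspg_eq.refl)
next
  case (Cons x w)
  have wn: "w \<in> words n" and xv: "valid_gen n (fst x)" using Cons.prems by auto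
  have ih: "vspg_eq n (w @ inv_word w) []" using Cons.IH[OF wn] .
  have r: "vspg_eq n [inv_letter x] [inv_letter x]"
    by (rule vspg_eq.refl) (use xv in \<open>simp add: inv_letter_def words_def\<close>)
  have a: "vspg_eq n ((w @ inv_word w) @ [inv_letter x]) ([] @ [inv_letter x])"
    by (rule eq_cong[OF ih r])
  have b: "vspg_eq n ([x] @ ((w @ inv_word w) @ [inv_letter x])) ([x] @ ([] @ [inv_letter x]))"
    by (rule eq_app_l[OF a]) (use xv in \<open>simp add: words_def\<close>)
  have c: "vspg_eq n ([] @ [x, inv_letter x] @ []) ([] @ [])"
    by (rule vspg_eq.cancel) (use xv in auto)
  have d: "vspg_eq n ([x] @ ((w @ inv_word w) @ [inv_letter x])) []"
    using vspg_eq.trans[OF b] c by simp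
  show ?case using d by (simp add: inv_word_Cons)
qed

lemma l_inv_word: "w \<in> words n \<Longrightarrow> vspg_eq n (inv_word w @ w) []"
  using r_inv_word[of "inv_word w" n] by simp


lemma group_VSPG: "group (VSPG n)"
proof (rule groupI)
  fix x y assume "x \<in> carrier (VSPG n)" "y \<in> carrier (VSPG n)"
  then show "x \<otimes>\<^bsub>VSPG n\<^esub> y \<in> carrier (VSPG n)"
    by (elim carrier_E) (simp add: mult_cls)
next
  show "\<one>\<^bsub>VSPG n\<^esub> \<in> carrier (VSPG n)" by (simp add: one_VSPG)
next
  fix x y z assume "x \<in> carrier (VSPG n)" "y \<in> carrier (VSPG n)" "z \<in> carrier (VSPG n)"
  then show "x \<otimes>\<^bsub>VSPG n\<^esub> y \<otimes>\<^bsub>VSPG n\<^esub> z = x \<otimes>\<^bsub>VSPG n\<^esub> (y \<otimes>\<^bsub>VSPG n\<^esub> z)"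
    by (elim carrier_E) (simp add: mult_cls)
next
  fix x assume "x \<in> carrier (VSPG n)"
  then show "\<one>\<^bsub>VSPG n\<^esub> \<otimes>\<^bsub>VSPG n\<^esub> x = x"
    by (elim carrier_E) (simp add: mult_cls one_VSPG)
next
  fix x assume "x \<in> carrier (VSPG n)"
  then show "\<exists>y\<in>carrier (VSPG n). y \<otimes>\<^bsub>VSPG n\<^esub> x = \<one>\<^bsub>VSPG n\<^esub>"
  proof (elim carrier_E)
    fix w assume w: "w \<in> words n" "x = cls n w"
    show ?thesis
      by (rule bexI[of _ "cls n (inv_word w)"]) (use w in \<open>simp_all add: mult_cls one_VSPG cls_eqI l_inv_word\<close>)
  qed
qed







lemma inv_cls: "w \<in> words n \<Longrightarrow> inv\<^bsub>VSPG n\<^esub> (cls n w) = cls n (inv_word w)"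
  by (intro group.inv_equality[OF group_VSPG]) (simp_all add: mult_cls one_VSPG cls_eqI l_inv_word)




lemma (in group) conj_closure_props:
  assumes K: "subgroup K G" and T: "T \<subseteq> K"
  defines "C \<equiv> (\<Union>g\<in>K. (\<lambda>s. g \<otimes> s \<otimes> inv g) ` T)"
  shows "normal_closure (G\<lparr>carrier := K\<rparr>) T = generate G C"
    and "C \<subseteq> K"
proof -
  have KC: "K \<subseteq> carrier G" using K subgroup.subset by blast
  show CK: "C \<subseteq> K" unfolding C_def using K T
    by (auto intro!: subgroup.m_closed subgroup.m_inv_closed)
  have "(\<Union>g\<in>carrier (G\<lparr>carrier := K\<rparr>). (\<lambda>s. g \<otimes>\<^bsub>G\<lparr>carrier := K\<rparr>\<^esub> s \<otimes>\<^bsub>G\<lparr>carrier := K\<rparr>\<^esub> inv\<^bsub>G\<lparr>carrier := K\<rparr>\<^esub> g) ` T) = C"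
    unfolding C_def using K by (simp add: m_inv_consistent)
  then show "normal_closure (G\<lparr>carrier := K\<rparr>) T = generate G C"
    unfolding normal_closure_def using generate_consistent[OF CK K] by simp
qed

lemma (in group) semidirect_abstract:
  assumes K: "subgroup K G" and H: "subgroup H G" and HK: "H \<subseteq> K" and T: "T \<subseteq> K"
    and Kgen: "K = generate G (Hg \<union> T)" and Hg: "Hg \<subseteq> H"
    and rho_c: "\<And>x. x \<in> carrier G \<Longrightarrow> rho x \<in> carrier G"
    and rho_m: "\<And>x y. x \<in> carrier G \<Longrightarrow> y \<in> carrier G \<Longrightarrow> rho (x \<otimes> y) = rho x \<otimes> rho y"
    and rho_H: "\<And>x. x \<in> H \<Longrightarrow> rho x = x"
    and rho_T: "\<And>x. x \<in> T \<Longrightarrow> rho x = \<one>"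
    and rho_K: "\<And>x. x \<in> K \<Longrightarrow> rho x \<in> H"
  shows "internal_semidirect (G\<lparr>carrier := K\<rparr>) (normal_closure (G\<lparr>carrier := K\<rparr>) T) H"
    and "subgroup (normal_closure (G\<lparr>carrier := K\<rparr>) T) G"
proof -
  define C where "C = (\<Union>g\<in>K. (\<lambda>s. g \<otimes> s \<otimes> inv g) ` T)"
  define N where "N = normal_closure (G\<lparr>carrier := K\<rparr>) T"
  have KC: "K \<subseteq> carrier G" using K subgroup.subset by blast
  have TC: "T \<subseteq> carrier G" using T KC by blast
  have NC: "N = generate G C" and CK: "C \<subseteq> K"
    using conj_closure_props[OF K T] unfolding C_def N_def by auto
  have CC: "C \<subseteq> carrier G" using CK KC by blast
  have NG: "subgroup N G" unfolding NC by (rule generate_is_subgroup[OF CC])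
  then show "subgroup (normal_closure (G\<lparr>carrier := K\<rparr>) T) G" unfolding N_def .
  have NK: "N \<subseteq> K" unfolding NC by (rule generate_subgroup_incl[OF CK K])
  have rho_one: "rho \<one> = \<one>"
    using rho_m[of \<one> \<one>] rho_c[of \<one>] by (metis l_one one_closed r_cancel_one')
  have rho_inv: "\<And>x. x \<in> carrier G \<Longrightarrow> rho (inv x) = inv (rho x)"
  proof -
    fix x assume x: "x \<in> carrier G"
    have "rho (inv x) \<otimes> rho x = \<one>" using rho_m[of "inv x" x] x rho_one by simp
    then show "rho (inv x) = inv (rho x)" using x rho_c by (simp add: inv_char group.inv_equality)
  qed
  have Nrho: "\<And>x. x \<in> N \<Longrightarrow> rho x = \<one>"
  proof -
    fix x assume "x \<in> N"
    then show "rho x = \<one>" unfolding NC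
    proof (induction rule: generate.induct)
      case one then show ?case by (rule rho_one)
    next
      case (incl h)
      then obtain g s where g: "g \<in> K" and s: "s \<in> T" and h: "h = g \<otimes> s \<otimes> inv g"
        unfolding C_def by blast
      have gc: "g \<in> carrier G" using g KC by blast
      have sc: "s \<in> carrier G" using s TC by blast
      show ?case using gc sc rho_c[OF gc] by (simp add: h rho_m rho_inv rho_T[OF s])
    next
      case (inv h)
      then obtain g s where g: "g \<in> K" and s: "s \<in> T" and h: "h = g \<otimes> s \<otimes> inv g"
        unfolding C_def by blast
      have gc: "g \<in> carrier G" using g KC by blast
      have sc: "s \<in> carrier G" using s TC by blast
      show ?case using gc sc rho_c[OF gc] by (simp add: h rho_m rho_inv rho_T[OF s])
    next
      case (eng h1 h2)
      then show ?case using generate_in_carrier[OF CC] rho_m by simp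
    qed
  qed
  have conjN: "\<And>x h. x \<in> K \<Longrightarrow> h \<in> N \<Longrightarrow> x \<otimes> h \<otimes> inv x \<in> N"
  proof -
    fix x h assume x: "x \<in> K" and "h \<in> N"
    have xc: "x \<in> carrier G" using x KC by blast
    from \<open>h \<in> N\<close> show "x \<otimes> h \<otimes> inv x \<in> N" unfolding NC
    proof (induction rule: generate.induct)
      case one then show ?case using xc by (simp add: generate.one)
    next
      case (incl h)
      then obtain g s where g: "g \<in> K" and s: "s \<in> T" and h: "h = g \<otimes> s \<otimes> inv g"
        unfolding C_def by blast
      have gc: "g \<in> carrier G" using g KC by blast
      have sc: "s \<in> carrier G" using s TC by blast
      have "x \<otimes> h \<otimes> inv x = (x \<otimes> g) \<otimes> s \<otimes> inv (x \<otimes> g)"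
        using gc sc xc by (simp add: h inv_mult_group m_assoc)
      moreover have "x \<otimes> g \<in> K" using x g K by (simp add: subgroup.m_closed)
      ultimately have "x \<otimes> h \<otimes> inv x \<in> C" unfolding C_def using s by blast
      then show ?case by (rule generate.incl)
    next
      case (inv h)
      then obtain g s where g: "g \<in> K" and s: "s \<in> T" and h: "h = g \<otimes> s \<otimes> inv g"
        unfolding C_def by blast
      have gc: "g \<in> carrier G" using g KC by blast
      have sc: "s \<in> carrier G" using s TC by blast
      have hc: "h \<in> carrier G" using h gc sc by simp
      have "x \<otimes> inv h \<otimes> inv x = inv ((x \<otimes> g) \<otimes> s \<otimes> inv (x \<otimes> g))"
        using gc sc xc by (simp add: h inv_mult_group m_assoc)
      moreover have "x \<otimes> g \<in> K" using x g K by (simp add: subgroup.m_closed)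
      ultimately show ?case unfolding C_def using s by (auto intro: generate.inv)
    next
      case (eng h1 h2)
      have c1: "h1 \<in> carrier G" and c2: "h2 \<in> carrier G"
        using eng.hyps generate_in_carrier[OF CC] by auto
      have "(x \<otimes> h1 \<otimes> inv x) \<otimes> (x \<otimes> h2 \<otimes> inv x) = x \<otimes> h1 \<otimes> (inv x \<otimes> x) \<otimes> h2 \<otimes> inv x"
        using c1 c2 xc by (simp add: m_assoc del: l_inv r_inv) (metis m_assoc inv_closed m_closed l_inv l_one)
      also have "\<dots> = x \<otimes> (h1 \<otimes> h2) \<otimes> inv x"
        using c1 c2 xc by (simp add: m_assoc)
      finally have "x \<otimes> (h1 \<otimes> h2) \<otimes> inv x = (x \<otimes> h1 \<otimes> inv x) \<otimes> (x \<otimes> h2 \<otimes> inv x)" by simp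
      then show ?case using eng.IH by (simp add: generate.eng)
    qed
  qed
  have GK: "group (G\<lparr>carrier := K\<rparr>)" using K by (rule subgroup.subgroup_is_group) (rule is_group)
  have NK': "subgroup N (G\<lparr>carrier := K\<rparr>)" by (rule subgroup_incl[OF NG K NK])
  have HK': "subgroup H (G\<lparr>carrier := K\<rparr>)" by (rule subgroup_incl[OF H K HK])
  have normal: "N \<lhd> G\<lparr>carrier := K\<rparr>"
    using group.normal_inv_iff[OF GK] NK' conjN K by (simp add: m_inv_consistent)
  have inter: "N \<inter> H = {\<one>}"
  proof
    show "N \<inter> H \<subseteq> {\<one>}" using Nrho rho_H by force
    show "{\<one>} \<subseteq> N \<inter> H" using NG H by (simp add: subgroup.one_closed)
  qed
  have key: "\<And>x. x \<in> K \<Longrightarrow> x \<otimes> inv (rho x) \<in> N"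
  proof -
    have HgC: "Hg \<union> T \<subseteq> carrier G" using Hg HK KC T by blast
    fix x assume "x \<in> K"
    then have "x \<in> generate G (Hg \<union> T)" using Kgen by simp
    then show "x \<otimes> inv (rho x) \<in> N"
    proof (induction rule: generate.induct)
      case one then show ?case using NG rho_one by (simp add: subgroup.one_closed)
    next
      case (incl h)
      show ?case
      proof (cases "h \<in> Hg")
        case True
        then have "rho h = h" using Hg rho_H by blast
        moreover have "h \<in> carrier G" using True Hg HK KC by blast
        ultimately show ?thesis using NG by (simp add: subgroup.one_closed)
      next
        case False
        then have s: "h \<in> T" using incl by blast
        have sc: "h \<in> carrier G" using s TC by blast
        have "\<one> \<otimes> h \<otimes> inv \<one> \<in> C" unfolding C_def using s K subgroup.one_closed by blast
        then have "h \<in> N" unfolding NC using sc by (simp add: generate.incl)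
        then show ?thesis using rho_T[OF s] sc by simp
      qed
    next
      case (inv h)
      have hc: "h \<in> carrier G" using inv HgC by blast
      show ?case
      proof (cases "h \<in> Hg")
        case True
        then have "rho h = h" using Hg rho_H by blast
        then show ?thesis using NG hc rho_inv[OF hc] by (simp add: subgroup.one_closed)
      next
        case False
        then have s: "h \<in> T" using inv by blast
        have "\<one> \<otimes> h \<otimes> inv \<one> \<in> C" unfolding C_def using s K subgroup.one_closed by blast
        then have "h \<in> N" unfolding NC using hc by (simp add: generate.incl)
        then have "inv h \<in> N" using NG by (simp add: subgroup.m_inv_closed)
        then show ?thesis using rho_T[OF s] hc rho_inv[OF hc] by simp
      qed
    next
      case (eng x y)
      have xc: "x \<in> carrier G" and yc: "y \<in> carrier G"
        using eng.hyps generate_in_carrier[OF HgC] by auto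
      have xK: "x \<in> K" using eng.hyps(1) Kgen by simp
      have rx: "rho x \<in> carrier G" and ry: "rho y \<in> carrier G" using rho_c xc yc by auto
      have "x \<otimes> y \<otimes> inv (rho (x \<otimes> y)) = (x \<otimes> (y \<otimes> inv (rho y)) \<otimes> inv x) \<otimes> (x \<otimes> inv (rho x))"
        using xc yc rx ry by (simp add: rho_m inv_mult_group m_assoc) (metis m_assoc inv_closed m_closed l_inv l_one)
      moreover have "x \<otimes> (y \<otimes> inv (rho y)) \<otimes> inv x \<in> N" using conjN[OF xK eng.IH(2)] .
      ultimately show ?case using eng.IH(1) NG by (simp add: subgroup.m_closed)
    qed
  qed
  have prod: "N <#>\<^bsub>G\<lparr>carrier := K\<rparr>\<^esub> H = K"
  proof
    show "N <#>\<^bsub>G\<lparr>carrier := K\<rparr>\<^esub> H \<subseteq> K"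
      unfolding set_mult_def using NK HK K by (auto intro: subgroup.m_closed)
  next
    show "K \<subseteq> N <#>\<^bsub>G\<lparr>carrier := K\<rparr>\<^esub> H"
    proof
      fix x assume x: "x \<in> K"
      have xc: "x \<in> carrier G" using x KC by blast
      have rx: "rho x \<in> carrier G" using rho_c xc by blast
      have "x = (x \<otimes> inv (rho x)) \<otimes> rho x" using xc rx by (simp add: m_assoc)
      then show "x \<in> N <#>\<^bsub>G\<lparr>carrier := K\<rparr>\<^esub> H"
        unfolding set_mult_def using key[OF x] rho_K[OF x] by auto
    qed
  qed
  show "internal_semidirect (G\<lparr>carrier := K\<rparr>) (normal_closure (G\<lparr>carrier := K\<rparr>) T) H"
    unfolding internal_semidirect_def N_def[symmetric]
    using GK normal HK' inter prod by simp
qed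




definition del :: "nat \<Rightarrow> word \<Rightarrow> word" where
  "del k w = filter (\<lambda>x. valid_gen k (fst x)) w"

lemma rel_del: "(l, r) \<in> vspg_rels n \<Longrightarrow> del k l = del k r \<or> (del k l = l \<and> del k r = r)"
  unfolding vspg_rels_def mu_def ga_def in_range_def del_def
  by (elim UnE; clarsimp; (elim UnE)?; clarsimp split: if_splits)


lemma del_app[simp]: "del k (u @ v) = del k u @ del k v"
  by (simp add: del_def)

lemma del_words: "w \<in> words n \<Longrightarrow> del k w \<in> words n"
  by (auto simp: del_def words_def)

lemma del_words_k: "del k w \<in> words k"
  by (auto simp: del_def words_def)

lemma valid_gen_mono: "valid_gen m g \<Longrightarrow> m \<le> n \<Longrightarrow> valid_gen n g"
  by (cases g) auto

lemma words_mono: "w \<in> words m \<Longrightarrow> m \<le> n \<Longrightarrow> w \<in> words n"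
  by (auto simp: words_def intro: valid_gen_mono)

lemma del_id: "w \<in> words k \<Longrightarrow> del k w = w"
  by (auto simp: del_def words_def)

lemma eq_del: "vspg_eq n u v \<Longrightarrow> vspg_eq n (del k u) (del k v)"
proof (induction rule: vspg_eq.induct)
  case (refl w) then show ?case by (intro vspg_eq.refl del_words)
next
  case (sym u v) show ?case using sym.IH by (rule vspg_eq.sym)
next
  case (trans u v w) show ?case using trans.IH by (rule vspg_eq.trans)
next
  case (cancel u v x)
  show ?case
  proof (cases "valid_gen k (fst x)")
    case True
    then show ?thesis using vspg_eq.cancel[of "del k u" n "del k v" x] cancel
      by (simp add: del_def inv_letter_def del_words[unfolded del_def])
  next
    case False
    then show ?thesis using cancel
      by (simp add: del_def inv_letter_def) (metis del_def del_words vspg_eq.refl words_append)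
  qed
next
  case (rel l r u v)
  have lr: "l \<in> words n" "r \<in> words n" using rels_words[OF rel(1)] by auto
  from rel_del[OF rel(1), of k] show ?case
  proof
    assume "del k l = del k r"
    then show ?thesis using rel lr by (simp add: vspg_eq.refl del_words)
  next
    assume "del k l = l \<and> del k r = r"
    then show ?thesis using vspg_eq.rel[OF rel(1), of "del k u" "del k v"] rel
      by (simp add: del_words)
  qed
qed

definition rho :: "nat \<Rightarrow> nat \<Rightarrow> word set \<Rightarrow> word set" where
  "rho n k A = cls n (del k (SOME w. w \<in> A))"

lemma rho_cls: assumes "w \<in> words n" shows "rho n k (cls n w) = cls n (del k w)"
proof -
  have "w \<in> cls n w" using vspg_eq.refl[OF assms] by (simp only: mem_cls)
  then have "(SOME w'. w' \<in> cls n w) \<in> cls n w" by (rule someI)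
  then have "vspg_eq n w (SOME w'. w' \<in> cls n w)" by (simp only: mem_cls)
  then have "vspg_eq n (del k (SOME w'. w' \<in> cls n w)) (del k w)"
    by (rule vspg_eq.sym[OF eq_del])
  then show ?thesis unfolding rho_def by (rule cls_eqI)
qed

definition Sgen :: "nat \<Rightarrow> nat \<Rightarrow> word set set" where
  "Sgen n k = {mu_el n i j | i j. in_range k i \<and> in_range k j \<and> i \<noteq> j}
      \<union> {ga_el n i j | i j. in_range k i \<and> in_range k j \<and> i \<noteq> j}"

lemma VSPG_sub_Sgen: "VSPG_sub n k = generate (VSPG n) (Sgen n k)"
  by (simp add: VSPG_sub_def Sgen_def)

lemma Sgen_carrier: "k \<le> n \<Longrightarrow> Sgen n k \<subseteq> carrier (VSPG n)"
  unfolding Sgen_def mu_el_def ga_el_def in_range_def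
  by (auto intro!: cls_carrier simp: mu_def ga_def)

lemma sub_subgroup: "k \<le> n \<Longrightarrow> subgroup (VSPG_sub n k) (VSPG n)"
  unfolding VSPG_sub_Sgen by (rule group.generate_is_subgroup[OF group_VSPG Sgen_carrier])

lemma Sgen_words: "x \<in> Sgen n m \<Longrightarrow> \<exists>g. valid_gen m g \<and> x = cls n [(g, True)]"
  unfolding Sgen_def mu_el_def ga_el_def in_range_def mu_def ga_def
  by (auto intro: exI[of _ "Mu _ _"] exI[of _ "Ga _ _"])

lemma sub_words: assumes "x \<in> VSPG_sub n m" "m \<le> n" shows "\<exists>w\<in>words m. x = cls n w"
  using assms(1) unfolding VSPG_sub_Sgen
proof (induction rule: generate.induct)
  case one then show ?case by (auto simp: one_VSPG)
next
  case (incl h)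
  then obtain g where "valid_gen m g" "h = cls n [(g, True)]" using Sgen_words by blast
  then show ?case by (intro bexI[of _ "[(g, True)]"]) (auto simp: words_def)
next
  case (inv h)
  then obtain g where g: "valid_gen m g" "h = cls n [(g, True)]" using Sgen_words by blast
  have "[(g, True)] \<in> words n" using valid_gen_mono[OF g(1) assms(2)] by (simp add: words_def)
  then have "inv\<^bsub>VSPG n\<^esub> h = cls n [(g, False)]" using g by (simp add: inv_cls inv_word_def inv_letter_def)
  then show ?case using g by (intro bexI[of _ "[(g, False)]"]) (auto simp: words_def)
next
  case (eng h1 h2)
  then obtain w1 w2 where "w1 \<in> words m" "w2 \<in> words m" "h1 = cls n w1" "h2 = cls n w2" by blast
  moreover have "w1 \<in> words n" "w2 \<in> words n" using calculation assms(2) words_mono by blast+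
  ultimately show ?case by (intro bexI[of _ "w1 @ w2"]) (simp_all add: mult_cls)
qed

lemma gen_in_sub: "valid_gen m g \<Longrightarrow> m \<le> n \<Longrightarrow> cls n [(g, True)] \<in> VSPG_sub n m"
  unfolding VSPG_sub_Sgen
  by (rule generate.incl, cases g) (auto simp: Sgen_def mu_el_def ga_el_def mu_def ga_def in_range_def)

lemma word_in_sub: assumes "w \<in> words m" "m \<le> n" shows "cls n w \<in> VSPG_sub n m"
  using assms(1)
proof (induction w)
  case Nil then show ?case using sub_subgroup[OF assms(2)] by (simp add: one_VSPG[symmetric] subgroup.one_closed)
next
  case (Cons x w)
  obtain g b where x: "x = (g, b)" by (cases x)
  have g: "valid_gen m g" using Cons.prems x by simp
  have gn: "[(g, True)] \<in> words n" using valid_gen_mono[OF g assms(2)] by (simp add: words_def)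
  have wn: "w \<in> words n" using Cons.prems assms(2) words_mono[of w m n] by simp
  have xin: "cls n [x] \<in> VSPG_sub n m"
  proof (cases b)
    case True then show ?thesis using gen_in_sub[OF g assms(2)] x by simp
  next
    case False
    have "cls n [x] = inv\<^bsub>VSPG n\<^esub> cls n [(g, True)]"
      using gn False x by (simp add: inv_cls inv_word_def inv_letter_def)
    then show ?thesis using gen_in_sub[OF g assms(2)] sub_subgroup[OF assms(2)]
      by (simp add: subgroup.m_inv_closed)
  qed
  have "cls n (x # w) = cls n [x] \<otimes>\<^bsub>VSPG n\<^esub> cls n w"
    using gn wn x by (simp add: mult_cls words_def)
  then show ?case using xin Cons sub_subgroup[OF assms(2)] by (simp add: subgroup.m_closed)
qed

lemma sub_full: "VSPG_sub n n = carrier (VSPG n)"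
proof
  show "VSPG_sub n n \<subseteq> carrier (VSPG n)" using sub_subgroup[of n n] subgroup.subset by blast
  show "carrier (VSPG n) \<subseteq> VSPG_sub n n"
    by (auto elim!: carrier_E intro!: word_in_sub)
qed




lemma in_Sgen: "1 \<le> i \<Longrightarrow> i \<le> m \<Longrightarrow> 1 \<le> j \<Longrightarrow> j \<le> m \<Longrightarrow> i \<noteq> j \<Longrightarrow>
   mu_el n i j \<in> Sgen n m \<and> ga_el n i j \<in> Sgen n m"
  unfolding Sgen_def in_range_def by blast

lemma Sgen_split: assumes "1 \<le> k" shows "Sgen n (Suc k) = Sgen n k \<union> VS_gens n (Suc k)"
proof (intro equalityI subsetI)
  fix x assume "x \<in> Sgen n (Suc k)"
  then obtain i j where ij: "1 \<le> i" "i \<le> Suc k" "1 \<le> j" "j \<le> Suc k" "i \<noteq> j"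
     and x: "x = mu_el n i j \<or> x = ga_el n i j"
    unfolding Sgen_def in_range_def by blast
  show "x \<in> Sgen n k \<union> VS_gens n (Suc k)"
  proof (cases "i \<le> k \<and> j \<le> k")
    case True then show ?thesis using ij x unfolding Sgen_def in_range_def by blast
  next
    case False
    then have "i = Suc k \<or> j = Suc k" using ij by auto
    then show ?thesis
    proof
      assume i: "i = Suc k"
      have "1 \<le> j \<and> j < Suc k \<and> (x = mu_el n j (Suc k) \<or> x = mu_el n (Suc k) j \<or> x = ga_el n j (Suc k) \<or> x = ga_el n (Suc k) j)"
        using ij x i by auto
      then have "x \<in> VS_gens n (Suc k)" unfolding VS_gens_def by blast
      then show ?thesis by blast
    next
      assume jj: "j = Suc k"
      have "1 \<le> i \<and> i < Suc k \<and> (x = mu_el n i (Suc k) \<or> x = mu_el n (Suc k) i \<or> x = ga_el n i (Suc k) \<or> x = ga_el n (Suc k) i)"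
        using ij x jj by auto
      then have "x \<in> VS_gens n (Suc k)" unfolding VS_gens_def by blast
      then show ?thesis by blast
    qed
  qed
next
  fix x assume "x \<in> Sgen n k \<union> VS_gens n (Suc k)"
  then show "x \<in> Sgen n (Suc k)"
  proof
    assume "x \<in> Sgen n k"
    then obtain i j where ij: "1 \<le> i" "i \<le> k" "1 \<le> j" "j \<le> k" "i \<noteq> j"
       and x: "x = mu_el n i j \<or> x = ga_el n i j"
      unfolding Sgen_def in_range_def by blast
    have "i \<le> Suc k" "j \<le> Suc k" using ij by auto
    then show ?thesis unfolding Sgen_def in_range_def using ij(1,3,5) x by blast
  next
    assume "x \<in> VS_gens n (Suc k)"
    then obtain j where j: "1 \<le> j" "j < Suc k" and
      x: "x = mu_el n j (Suc k) \<or> x = mu_el n (Suc k) j \<or> x = ga_el n j (Suc k) \<or> x = ga_el n (Suc k) j"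
      unfolding VS_gens_def by blast
    have a: "mu_el n j (Suc k) \<in> Sgen n (Suc k)" "mu_el n (Suc k) j \<in> Sgen n (Suc k)"
        "ga_el n j (Suc k) \<in> Sgen n (Suc k)" "ga_el n (Suc k) j \<in> Sgen n (Suc k)"
      using j in_Sgen[of j "Suc k" "Suc k" n] in_Sgen[of "Suc k" "Suc k" j n] by auto
    then show ?thesis using x by blast
  qed
qed


lemma VS_gens_sub: assumes "k \<le> n" shows "VS_gens n k \<subseteq> VSPG_sub n k"
proof
  fix x assume "x \<in> VS_gens n k"
  then obtain j where j: "1 \<le> j" "j < k" and
    x: "x = mu_el n j k \<or> x = mu_el n k j \<or> x = ga_el n j k \<or> x = ga_el n k j"
    unfolding VS_gens_def by blast
  have "x \<in> Sgen n k" using j x in_Sgen[of j k k n] in_Sgen[of k k j n] by auto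
  then show "x \<in> VSPG_sub n k" unfolding VSPG_sub_Sgen by (rule generate.incl)
qed

lemma rho_carrier: "x \<in> carrier (VSPG n) \<Longrightarrow> rho n m x \<in> carrier (VSPG n)"
  by (auto elim!: carrier_E simp: rho_cls del_words)

lemma rho_mult: "x \<in> carrier (VSPG n) \<Longrightarrow> y \<in> carrier (VSPG n) \<Longrightarrow>
   rho n m (x \<otimes>\<^bsub>VSPG n\<^esub> y) = rho n m x \<otimes>\<^bsub>VSPG n\<^esub> rho n m y"
  by (auto elim!: carrier_E simp: rho_cls del_words mult_cls)

lemma rho_fix: assumes "x \<in> VSPG_sub n m" "m \<le> n" shows "rho n m x = x"
proof -
  obtain w where w: "w \<in> words m" "x = cls n w" using sub_words[OF assms] by blast
  have "w \<in> words n" using w assms(2) words_mono by blast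
  then show ?thesis using w by (simp add: rho_cls del_id)
qed

lemma rho_into: assumes "x \<in> carrier (VSPG n)" "m \<le> n" shows "rho n m x \<in> VSPG_sub n m"
  using assms(1) by (auto elim!: carrier_E simp: rho_cls intro!: word_in_sub[OF del_words_k assms(2)])

lemma rho_kill: assumes "x \<in> VS_gens n (Suc m)" "Suc m \<le> n" shows "rho n m x = \<one>\<^bsub>VSPG n\<^esub>"
proof -
  obtain j where j: "1 \<le> j" "j < Suc m" and
    x: "x = mu_el n j (Suc m) \<or> x = mu_el n (Suc m) j \<or> x = ga_el n j (Suc m) \<or> x = ga_el n (Suc m) j"
    using assms unfolding VS_gens_def by blast
  have w: "[(g, True)] \<in> words n" if "valid_gen n g" for g using that by (simp add: words_def)
  have v: "valid_gen n (Mu j (Suc m))" "valid_gen n (Mu (Suc m) j)" "valid_gen n (Ga j (Suc m))" "valid_gen n (Ga (Suc m) j)"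
    using j assms(2) by auto
  show ?thesis using x
    by (elim disjE) (simp_all add: mu_el_def ga_el_def mu_def ga_def one_VSPG rho_cls[OF w[OF v(1)]]
       rho_cls[OF w[OF v(2)]] rho_cls[OF w[OF v(3)]] rho_cls[OF w[OF v(4)]] del_def)
qed

lemma semidirect_k:
  assumes "1 \<le> m" "Suc m \<le> n"
  shows "internal_semidirect ((VSPG n)\<lparr>carrier := VSPG_sub n (Suc m)\<rparr>) (VS_star n m) (VSPG_sub n m)"
    and "subgroup (VS_star n m) (VSPG n)"
proof -
  have m: "m \<le> n" using assms by simp
  note abs = group.semidirect_abstract[OF group_VSPG sub_subgroup[OF assms(2)] sub_subgroup[OF m]
     _ VS_gens_sub[OF assms(2)] _ _ rho_carrier[of _ n m] rho_mult[of _ n _ m] rho_fix[OF _ m] rho_kill[OF _ assms(2)], where Hg="Sgen n m"]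
  have HK: "VSPG_sub n m \<subseteq> VSPG_sub n (Suc m)"
    unfolding VSPG_sub_Sgen using Sgen_split[OF assms(1), of n]
    by (intro group.mono_generate[OF group_VSPG]) blast
  have Kgen: "VSPG_sub n (Suc m) = generate (VSPG n) (Sgen n m \<union> VS_gens n (Suc m))"
    unfolding VSPG_sub_Sgen Sgen_split[OF assms(1)] ..
  have Hg: "Sgen n m \<subseteq> VSPG_sub n m" unfolding VSPG_sub_Sgen by (blast intro: generate.incl)
  have into: "\<And>x. x \<in> VSPG_sub n (Suc m) \<Longrightarrow> rho n m x \<in> VSPG_sub n m"
    using rho_into[OF _ m] sub_subgroup[OF assms(2)] subgroup.subset by blast
  have "VS_star n m = normal_closure ((VSPG n)\<lparr>carrier := VSPG_sub n (Suc m)\<rparr>) (VS_gens n (Suc m))"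
    by (simp add: VS_star_def)
  then show "internal_semidirect ((VSPG n)\<lparr>carrier := VSPG_sub n (Suc m)\<rparr>) (VS_star n m) (VSPG_sub n m)"
    and "subgroup (VS_star n m) (VSPG n)"
    using abs[OF HK Kgen Hg] rho_fix[OF _ m] into by auto
qed




type_synonym sd = "(int \<Rightarrow> int) \<times> int"

definition sm :: "sd \<Rightarrow> sd \<Rightarrow> sd" where
  "sm p q = (\<lambda>x. fst p x + fst q (x - snd p), snd p + snd q)"
definition se :: sd where "se = (\<lambda>_. 0, 0)"
definition sinv :: "sd \<Rightarrow> sd" where "sinv p = (\<lambda>x. - fst p (x + snd p), - snd p)"

lemma sm_assoc: "sm (sm p q) r = sm p (sm q r)"
  by (simp add: sm_def fun_eq_iff algebra_simps)
lemma sm_se[simp]: "sm se p = p" "sm p se = p"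
  by (simp_all add: sm_def se_def)
lemma sm_sinv[simp]: "sm p (sinv p) = se" "sm (sinv p) p = se"
  by (simp_all add: sm_def se_def sinv_def fun_eq_iff)
lemma sinv_sinv[simp]: "sinv (sinv p) = p"
  by (simp add: sinv_def)
lemma sinv_sm: "sinv (sm p q) = sm (sinv q) (sinv p)"
  by (simp add: sm_def sinv_def fun_eq_iff algebra_simps)

definition spair :: "nat \<Rightarrow> nat \<Rightarrow> int" where
  "spair i j = (if (i = 1 \<and> j = 2) \<or> (i = 2 \<and> j = 1) then 1 else 0)"
definition cpair :: "nat \<Rightarrow> nat \<Rightarrow> nat \<Rightarrow> int" where
  "cpair k i j = (if (i = 1 \<and> j = k) \<or> (i = k \<and> j = 2) then 1
      else if (i = 2 \<and> j = k) \<or> (i = k \<and> j = 1) then -1 else 0)"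
definition V :: "nat \<Rightarrow> nat \<Rightarrow> nat \<Rightarrow> sd" where
  "V k i j = (\<lambda>x. if x = 0 then cpair k i j else 0, spair i j)"

lemma triple:
  assumes "3 \<le> k" "i \<noteq> j" "i \<noteq> l" "j \<noteq> l"
  shows "sm (V k i j) (sm (V k i l) (V k j l)) = sm (V k j l) (sm (V k i l) (V k i j))"
  using assms unfolding sm_def V_def spair_def cpair_def
  by (auto simp: fun_eq_iff)

lemma commute:
  assumes "3 \<le> k" "distinct [i, j, a, b]"
  shows "sm (V k i j) (V k a b) = sm (V k a b) (V k i j)"
  using assms unfolding sm_def V_def spair_def cpair_def
  by (auto simp: fun_eq_iff)


fun gv :: "nat \<Rightarrow> gen \<Rightarrow> sd" where
  "gv k (Mu i j) = V k i j"
| "gv k (Ga i j) = V k i j"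

definition lv :: "nat \<Rightarrow> letter \<Rightarrow> sd" where
  "lv k x = (if snd x then gv k (fst x) else sinv (gv k (fst x)))"

definition Ew :: "nat \<Rightarrow> word \<Rightarrow> sd" where
  "Ew k w = foldr (\<lambda>x acc. sm (lv k x) acc) w se"

lemma Ew_Nil[simp]: "Ew k [] = se" by (simp add: Ew_def)
lemma Ew_Cons[simp]: "Ew k (x # w) = sm (lv k x) (Ew k w)" by (simp add: Ew_def)
lemma Ew_append[simp]: "Ew k (u @ v) = sm (Ew k u) (Ew k v)"
  by (induction u) (simp_all add: sm_assoc)

lemma lv_inv: "lv k (inv_letter x) = sinv (lv k x)"
  by (simp add: lv_def inv_letter_def)

lemma Ew_inv_word: "Ew k (inv_word w) = sinv (Ew k w)"
  by (induction w) (simp_all add: inv_word_Cons lv_inv sinv_sm, simp add: inv_word_def se_def sinv_def)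

lemma Ew_mu: "Ew k (mu i j) = V k i j" and Ew_ga: "Ew k (ga i j) = V k i j"
  by (simp_all add: mu_def ga_def lv_def)

lemma rel_Ew: assumes "(l, r) \<in> vspg_rels n" "3 \<le> k" shows "Ew k l = Ew k r"
proof -
  note T = triple[OF assms(2)] and Cm = commute[OF assms(2)]
  from assms(1) show ?thesis
    unfolding vspg_rels_def
  proof (elim UnE)
    assume "(l, r) \<in> {(mu i j @ mu i k @ mu j k, mu j k @ mu i k @ mu i j) | i j k.
        in_range n i \<and> in_range n j \<and> in_range n k \<and> distinct [i, j, k]}"
    then obtain a b c where "l = mu a b @ mu a c @ mu b c" "r = mu b c @ mu a c @ mu a b" "distinct [a, b, c]" by blast
    then show ?thesis using T[of a b c] by (simp add: Ew_mu Ew_ga)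
  next
    assume "(l, r) \<in> {(mu i j @ mu i k @ ga j k, ga j k @ mu i k @ mu i j) | i j k.
        in_range n i \<and> in_range n j \<and> in_range n k \<and> distinct [i, j, k]}"
    then obtain a b c where "l = mu a b @ mu a c @ ga b c" "r = ga b c @ mu a c @ mu a b" "distinct [a, b, c]" by blast
    then show ?thesis using T[of a b c] by (simp add: Ew_mu Ew_ga)
  next
    assume "(l, r) \<in> {(ga i j @ mu i k @ mu j k, mu j k @ mu i k @ ga i j) | i j k.
        in_range n i \<and> in_range n j \<and> in_range n k \<and> distinct [i, j, k]}"
    then obtain a b c where "l = ga a b @ mu a c @ mu b c" "r = mu b c @ mu a c @ ga a b" "distinct [a, b, c]" by blast
    then show ?thesis using T[of a b c] by (simp add: Ew_mu Ew_ga)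
  next
    assume "(l, r) \<in> {(mu i j @ ga j i, ga i j @ mu j i) | i j.
        in_range n i \<and> in_range n j \<and> i \<noteq> j}"
    then obtain a b where "l = mu a b @ ga b a" "r = ga a b @ mu b a" by blast
    then show ?thesis by (simp add: Ew_mu Ew_ga)
  next
    assume "(l, r) \<in> {(mu i j @ mu k l, mu k l @ mu i j) | i j k l.
        in_range n i \<and> in_range n j \<and> in_range n k \<and> in_range n l \<and> distinct [i, j, k, l]}"
    then obtain a b c d where "l = mu a b @ mu c d" "r = mu c d @ mu a b" "distinct [a, b, c, d]" by blast
    then show ?thesis using Cm[of a b c d] by (simp add: Ew_mu Ew_ga sm_assoc[symmetric])
  next
    assume "(l, r) \<in> {(ga i j @ ga k l, ga k l @ ga i j) | i j k l.
        in_range n i \<and> in_range n j \<and> in_range n k \<and> in_range n l \<and> distinct [i, j, k, l]}"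
    then obtain a b c d where "l = ga a b @ ga c d" "r = ga c d @ ga a b" "distinct [a, b, c, d]" by blast
    then show ?thesis using Cm[of a b c d] by (simp add: Ew_mu Ew_ga sm_assoc[symmetric])
  next
    assume "(l, r) \<in> {(mu i j @ ga k l, ga k l @ mu i j) | i j k l.
        in_range n i \<and> in_range n j \<and> in_range n k \<and> in_range n l \<and> distinct [i, j, k, l]}"
    then obtain a b c d where "l = mu a b @ ga c d" "r = ga c d @ mu a b" "distinct [a, b, c, d]" by blast
    then show ?thesis using Cm[of a b c d] by (simp add: Ew_mu Ew_ga sm_assoc[symmetric])
  qed
qed


lemma eq_Ew: "vspg_eq n u v \<Longrightarrow> 3 \<le> k \<Longrightarrow> Ew k u = Ew k v"
proof (induction rule: vspg_eq.induct)
  case (cancel u v x) then show ?case by (simp add: lv_inv sm_assoc[symmetric])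
next
  case (rel l r u v) then show ?case using rel_Ew[OF rel(1)] by simp
qed simp_all

definition phi :: "nat \<Rightarrow> word set \<Rightarrow> sd" where
  "phi k A = Ew k (SOME w. w \<in> A)"

lemma phi_cls: assumes "w \<in> words n" "3 \<le> k" shows "phi k (cls n w) = Ew k w"
proof -
  have "w \<in> cls n w" using vspg_eq.refl[OF assms(1)] by (simp only: mem_cls)
  then have "(SOME w'. w' \<in> cls n w) \<in> cls n w" by (rule someI)
  then have "vspg_eq n w (SOME w'. w' \<in> cls n w)" by (simp only: mem_cls)
  then show ?thesis unfolding phi_def using eq_Ew assms(2) by metis
qed

lemma phi_mult: "x \<in> carrier (VSPG n) \<Longrightarrow> y \<in> carrier (VSPG n) \<Longrightarrow> 3 \<le> k \<Longrightarrow>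
   phi k (x \<otimes>\<^bsub>VSPG n\<^esub> y) = sm (phi k x) (phi k y)"
  by (auto elim!: carrier_E simp: phi_cls mult_cls)

lemma phi_inv: "x \<in> carrier (VSPG n) \<Longrightarrow> 3 \<le> k \<Longrightarrow>
   phi k (inv\<^bsub>VSPG n\<^esub> x) = sinv (phi k x)"
  by (auto elim!: carrier_E simp: phi_cls inv_cls Ew_inv_word)

lemma phi_one: "3 \<le> k \<Longrightarrow> phi k (\<one>\<^bsub>VSPG n\<^esub>) = se"
  by (simp add: one_VSPG phi_cls)

definition supp :: "(int \<Rightarrow> int) \<Rightarrow> int set" where "supp f = {x. f x \<noteq> 0}"

lemma supp_sm: "supp (fst (sm p q)) \<subseteq> supp (fst p) \<union> (\<lambda>x. x + snd p) ` supp (fst q)"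
proof
  fix x assume "x \<in> supp (fst (sm p q))"
  then have "fst p x \<noteq> 0 \<or> fst q (x - snd p) \<noteq> 0" by (auto simp: supp_def sm_def)
  then show "x \<in> supp (fst p) \<union> (\<lambda>x. x + snd p) ` supp (fst q)"
    by (auto simp: supp_def image_iff intro!: bexI[of _ "x - snd p"])
qed

lemma finite_supp_lv: "finite (supp (fst (lv k x)))"
proof -
  have "finite (supp (fst (gv k g)))" for g
    by (cases g) (auto simp: V_def supp_def intro: finite_subset[of _ "{0}"])
  moreover have "supp (fst (sinv p)) = (\<lambda>x. x - snd p) ` supp (fst p)" for p
    by (auto simp: supp_def sinv_def image_iff) (metis add_diff_cancel_right')
  ultimately show ?thesis by (simp add: lv_def)
qed

lemma finite_supp_Ew: "finite (supp (fst (Ew k w)))"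
proof (induction w)
  case Nil then show ?case by (simp add: se_def supp_def)
next
  case (Cons x w)
  show ?case using supp_sm[of "lv k x" "Ew k w"] finite_supp_lv[of k x] Cons
    by (simp add: finite_subset)
qed


lemma VS_gens_shift: assumes "t \<in> VS_gens n k" "k \<le> n" "3 \<le> k"
  shows "t \<in> carrier (VSPG n) \<and> snd (phi k t) = 0"
proof -
  obtain j where j: "1 \<le> j" "j < k" and
    x: "t = mu_el n j k \<or> t = mu_el n k j \<or> t = ga_el n j k \<or> t = ga_el n k j"
    using assms unfolding VS_gens_def by blast
  have w: "mu j k \<in> words n" "mu k j \<in> words n" "ga j k \<in> words n" "ga k j \<in> words n"
    using j assms(2) by (auto simp: mu_def ga_def words_def)
  have s: "spair j k = 0" "spair k j = 0" using assms(3) by (auto simp: spair_def)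
  show ?thesis using x w s assms(3)
    by (auto simp: mu_el_def ga_el_def phi_cls Ew_mu Ew_ga V_def)
qed

lemma Ew_rep: "3 \<le> k \<Longrightarrow> Ew k (replicate N (Mu 1 2, True)) = (\<lambda>_. 0, int N)"
  by (induction N) (auto simp: lv_def V_def cpair_def spair_def sm_def se_def)

lemma not_fg:
  assumes k3: "3 \<le> k" and kn: "k \<le> n"
  shows "\<not> finitely_generated_subgroup (VSPG n) (VS_star n (k - 1))"
proof
  interpret G: group "VSPG n" by (rule group_VSPG)
  define K where "K = VSPG_sub n k"
  define T where "T = VS_gens n k"
  define C where "C = (\<Union>g\<in>K. (\<lambda>s. g \<otimes>\<^bsub>VSPG n\<^esub> s \<otimes>\<^bsub>VSPG n\<^esub> inv\<^bsub>VSPG n\<^esub> g) ` T)"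
  have Ksub: "subgroup K (VSPG n)" unfolding K_def by (rule sub_subgroup[OF kn])
  have TK: "T \<subseteq> K" unfolding T_def K_def by (rule VS_gens_sub[OF kn])
  have KC: "K \<subseteq> carrier (VSPG n)" using Ksub subgroup.subset by blast
  have kk: "k - 1 + 1 = k" using k3 by simp
  have vs: "VS_star n (k - 1) = normal_closure ((VSPG n)\<lparr>carrier := K\<rparr>) T"
    by (simp only: VS_star_def kk K_def T_def)
  have VSC: "VS_star n (k - 1) = generate (VSPG n) C" and CK: "C \<subseteq> K"
    using G.conj_closure_props[OF Ksub TK] unfolding C_def vs by auto
  have CC: "C \<subseteq> carrier (VSPG n)" using CK KC by blast
  have step1: "\<And>x. x \<in> VS_star n (k - 1) \<Longrightarrow> x \<in> carrier (VSPG n) \<and> snd (phi k x) = 0"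
  proof -
    fix x assume "x \<in> VS_star n (k - 1)"
    then show "x \<in> carrier (VSPG n) \<and> snd (phi k x) = 0" unfolding VSC
    proof (induction rule: generate.induct)
      case one then show ?case using phi_one[OF k3] by (simp add: se_def)
    next
      case (incl h)
      then obtain g t where g: "g \<in> K" and t: "t \<in> T" and h: "h = g \<otimes>\<^bsub>VSPG n\<^esub> t \<otimes>\<^bsub>VSPG n\<^esub> inv\<^bsub>VSPG n\<^esub> g"
        unfolding C_def by blast
      have gc: "g \<in> carrier (VSPG n)" using g KC by blast
      have tc: "t \<in> carrier (VSPG n)" and st: "snd (phi k t) = 0"
        using VS_gens_shift[OF t[unfolded T_def] kn k3] by auto
      show ?case using gc tc st k3 by (simp add: h phi_mult phi_inv sm_def sinv_def)
    next
      case (inv h)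
      then obtain g t where g: "g \<in> K" and t: "t \<in> T" and h: "h = g \<otimes>\<^bsub>VSPG n\<^esub> t \<otimes>\<^bsub>VSPG n\<^esub> inv\<^bsub>VSPG n\<^esub> g"
        unfolding C_def by blast
      have gc: "g \<in> carrier (VSPG n)" using g KC by blast
      have tc: "t \<in> carrier (VSPG n)" and st: "snd (phi k t) = 0"
        using VS_gens_shift[OF t[unfolded T_def] kn k3] by auto
      show ?case using gc tc st k3 by (simp add: h phi_mult phi_inv sm_def sinv_def)
    next
      case (eng h1 h2)
      then show ?case using k3 by (simp add: phi_mult sm_def)
    qed
  qed
  assume "finitely_generated_subgroup (VSPG n) (VS_star n (k - 1))"
  then obtain S where S: "finite S" "S \<subseteq> VS_star n (k - 1)" "generate (VSPG n) S = VS_star n (k - 1)"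
    unfolding finitely_generated_subgroup_def by blast
  define U where "U = (\<Union>s\<in>S. supp (fst (phi k s)))"
  have finU: "finite U" unfolding U_def
  proof (rule finite_UN_I[OF S(1)])
    fix s assume "s \<in> S"
    then have "s \<in> carrier (VSPG n)" using S(2) step1 by blast
    then obtain w where "w \<in> words n" "s = cls n w" by (rule carrier_E)
    then show "finite (supp (fst (phi k s)))" using k3 by (simp add: phi_cls finite_supp_Ew)
  qed
  define D where "D = Max (insert 0 (abs ` U))"
  have D: "\<And>y. y \<in> U \<Longrightarrow> \<bar>y\<bar> \<le> D" unfolding D_def using finU by simp
  have D0: "0 \<le> D" unfolding D_def using finU by simp
  define P where "P = {x \<in> carrier (VSPG n). snd (phi k x) = 0 \<and> (\<forall>y. D < \<bar>y\<bar> \<longrightarrow> fst (phi k x) y = 0)}"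
  have genP: "generate (VSPG n) S \<subseteq> P"
  proof
    fix x assume "x \<in> generate (VSPG n) S"
    then show "x \<in> P"
    proof (induction rule: generate.induct)
      case one then show ?case using phi_one[OF k3] by (simp add: P_def se_def)
    next
      case (incl h)
      have "h \<in> carrier (VSPG n) \<and> snd (phi k h) = 0" using incl S(2) step1 by blast
      moreover have "\<forall>y. D < \<bar>y\<bar> \<longrightarrow> fst (phi k h) y = 0"
        using D incl unfolding U_def supp_def by fastforce
      ultimately show ?case by (simp add: P_def)
    next
      case (inv h)
      have hc: "h \<in> carrier (VSPG n) \<and> snd (phi k h) = 0" using inv S(2) step1 by blast
      moreover have "\<forall>y. D < \<bar>y\<bar> \<longrightarrow> fst (phi k h) y = 0"
        using D inv unfolding U_def supp_def by fastforce
      ultimately show ?case using k3 by (simp add: P_def phi_inv sinv_def)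
    next
      case (eng h1 h2)
      then show ?case using k3 by (simp add: P_def phi_mult sm_def)
    qed
  qed
  define N where "N = nat D + 1"
  define rw where "rw = replicate N (Mu 1 2, True)"
  have rwk: "rw \<in> words k" using k3 by (simp add: rw_def words_def)
  have rwn: "rw \<in> words n" using words_mono[OF rwk kn] .
  define g where "g = cls n rw"
  have gK: "g \<in> K" unfolding g_def K_def by (rule word_in_sub[OF rwk kn])
  have gc: "g \<in> carrier (VSPG n)" using gK KC by blast
  define t where "t = mu_el n 1 k"
  have tT: "t \<in> T" unfolding t_def T_def VS_gens_def using k3 by auto
  have tw: "mu 1 k \<in> words n" using k3 kn by (simp add: mu_def words_def)
  have tc: "t \<in> carrier (VSPG n)" unfolding t_def mu_el_def using tw by simp
  define z where "z = g \<otimes>\<^bsub>VSPG n\<^esub> t \<otimes>\<^bsub>VSPG n\<^esub> inv\<^bsub>VSPG n\<^esub> g"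
  have "z \<in> C" unfolding z_def C_def using gK tT by blast
  then have "z \<in> VS_star n (k - 1)" unfolding VSC by (rule generate.incl)
  then have "z \<in> P" using genP S(3) by blast
  moreover have "fst (phi k z) (int N) = 1"
  proof -
    have pg: "phi k g = (\<lambda>_. 0, int N)" unfolding g_def rw_def
      using phi_cls[OF rwn[unfolded rw_def] k3] Ew_rep[OF k3] by simp
    have pt: "phi k t = V k 1 k" unfolding t_def mu_el_def using phi_cls[OF tw k3] by (simp add: Ew_mu)
    show ?thesis using gc tc k3 by (simp add: z_def phi_mult phi_inv pg pt sm_def sinv_def V_def cpair_def)
  qed
  moreover have "D < \<bar>int N\<bar>" using D0 by (simp add: N_def)
  ultimately show False unfolding P_def by auto
qed




lemma VS_gens_2: "VS_gens n 2 = {mu_el n 1 2, mu_el n 2 1, ga_el n 1 2, ga_el n 2 1}"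
proof -
  have e: "\<And>P. (\<exists>j::nat. 1 \<le> j \<and> j < 2 \<and> P j) = P 1"
    by (metis less_2_cases_iff not_one_le_zero order_refl one_less_numeral_iff semiring_norm(76))
  show ?thesis unfolding VS_gens_def e by blast
qed

lemma Sgen_2: "Sgen n 2 = {mu_el n 1 2, mu_el n 2 1, ga_el n 1 2, ga_el n 2 1}"
proof -
  have a: "\<And>i j::nat. (in_range 2 i \<and> in_range 2 j \<and> i \<noteq> j) = ((i = 1 \<and> j = 2) \<or> (i = 2 \<and> j = 1))"
    unfolding in_range_def by auto
  show ?thesis unfolding Sgen_def a by auto
qed

lemma VS_star_1: assumes "2 \<le> n"
  shows "VS_star n 1 = VSPG_sub n 2"
    and "VSPG_sub n 2 = generate (VSPG n) {mu_el n 1 2, mu_el n 2 1, ga_el n 1 2, ga_el n 2 1}"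
proof -
  interpret G: group "VSPG n" by (rule group_VSPG)
  define K where "K = VSPG_sub n 2"
  define Fs where "Fs = {mu_el n 1 2, mu_el n 2 1, ga_el n 1 2, ga_el n 2 1}"
  define C where "C = (\<Union>g\<in>K. (\<lambda>s. g \<otimes>\<^bsub>VSPG n\<^esub> s \<otimes>\<^bsub>VSPG n\<^esub> inv\<^bsub>VSPG n\<^esub> g) ` Fs)"
  have Ksub: "subgroup K (VSPG n)" unfolding K_def by (rule sub_subgroup[OF assms])
  have KF: "K = generate (VSPG n) Fs" unfolding K_def Fs_def VSPG_sub_Sgen Sgen_2 ..
  then show "VSPG_sub n 2 = generate (VSPG n) {mu_el n 1 2, mu_el n 2 1, ga_el n 1 2, ga_el n 2 1}"
    unfolding K_def Fs_def .
  have FK: "Fs \<subseteq> K" unfolding KF by (blast intro: generate.incl)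
  have KC: "K \<subseteq> carrier (VSPG n)" using Ksub subgroup.subset by blast
  have vs: "VS_star n 1 = normal_closure ((VSPG n)\<lparr>carrier := K\<rparr>) Fs"
  proof -
    have "(1::nat) + 1 = 2" by simp
    then show ?thesis by (simp only: VS_star_def K_def Fs_def VS_gens_2)
  qed
  have VSC: "VS_star n 1 = generate (VSPG n) C" and CK: "C \<subseteq> K"
    using G.conj_closure_props[OF Ksub FK] unfolding C_def vs by auto
  have "generate (VSPG n) C \<subseteq> K" by (rule G.generate_subgroup_incl[OF CK Ksub])
  moreover have "Fs \<subseteq> C"
  proof
    fix s assume s: "s \<in> Fs"
    then have "s \<in> carrier (VSPG n)" using FK KC by blast
    then have "s = \<one>\<^bsub>VSPG n\<^esub> \<otimes>\<^bsub>VSPG n\<^esub> s \<otimes>\<^bsub>VSPG n\<^esub> inv\<^bsub>VSPG n\<^esub> \<one>\<^bsub>VSPG n\<^esub>" by simp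
    then show "s \<in> C" unfolding C_def using s Ksub subgroup.one_closed by blast
  qed
  then have "K \<subseteq> generate (VSPG n) C" unfolding KF by (rule G.mono_generate)
  ultimately show "VS_star n 1 = VSPG_sub n 2" unfolding VSC K_def by blast
qed

theorem mainTheorem12:
  fixes n :: nat
  assumes "n \<ge> 2"
  shows "group (VSPG n)
    \<and> VSPG_sub n n = carrier (VSPG n)
    \<and> (\<forall>k \<in> {2..n}. internal_semidirect ((VSPG n)\<lparr>carrier := VSPG_sub n k\<rparr>)
                       (VS_star n (k - 1)) (VSPG_sub n (k - 1)))
    \<and> (\<forall>k \<in> {3..n}. subgroup (VS_star n (k - 1)) (VSPG n)
                     \<and> \<not> finitely_generated_subgroup (VSPG n) (VS_star n (k - 1)))
    \<and> VSPG_sub n 2 = VS_star n 1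
    \<and> VS_star n 1 = generate (VSPG n) {mu_el n 1 2, mu_el n 2 1, ga_el n 1 2, ga_el n 2 1}"
proof (intro conjI ballI)
  show "group (VSPG n)" by (rule group_VSPG)
  show "VSPG_sub n n = carrier (VSPG n)" by (rule sub_full)
next
  fix k assume k: "k \<in> {2..n}"
  then have a: "1 \<le> k - 1" "Suc (k - 1) \<le> n" and b: "Suc (k - 1) = k" by auto
  show "internal_semidirect ((VSPG n)\<lparr>carrier := VSPG_sub n k\<rparr>) (VS_star n (k - 1)) (VSPG_sub n (k - 1))"
    using semidirect_k(1)[OF a] unfolding b .
next
  fix k assume k: "k \<in> {3..n}"
  then have a: "1 \<le> k - 1" "Suc (k - 1) \<le> n" by auto
  show "subgroup (VS_star n (k - 1)) (VSPG n)" by (rule semidirect_k(2)[OF a])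
  show "\<not> finitely_generated_subgroup (VSPG n) (VS_star n (k - 1))"
    using k by (intro not_fg) auto
next
  show "VSPG_sub n 2 = VS_star n 1" using VS_star_1[OF assms] by simp
  show "VS_star n 1 = generate (VSPG n) {mu_el n 1 2, mu_el n 2 1, ga_el n 1 2, ga_el n 2 1}"
    using VS_star_1[OF assms] by simp
qed


end
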